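(* For every $n\ge 1$, the sensitivity to synchronism of elementary cellular automaton rule $200$ satisfies $\mu(f_{200,n})=\dfrac{1}{3^n-2^{n+1}+2}$.
   Context: Cells are indexed by $\mathbb{Z}_n=\{0,\dots,n-1\}$, indices modulo $n$. Rule $200$ has local rule $r_{200}(x_1,x_2,x_3)=x_2\wedge(x_1\vee x_3)$, and global function $f_{200,n}(x)_i=r_{200}(x_{i-1},x_i,x_{i+1})$. An update schedule is an ordered partition $\Delta=(\Delta_1,\dots,\Delta_k)$ of $\mathbb{Z}_n$ into nonempty blocks; $\mathcal{P}_n$ is the set of them. For a block $B$ let $f^{(B)}(x)_i=f_{200,n}(x)_i$ if $i\in B$ and $x_i$ otherwise; $f^{(\Delta)}_{200,n}=f^{(\Delta_k)}\circ\cdots\circ f^{(\Delta_1)}$. The dynamics of $\Delta$ is the transition digraph with arcs $(x,f^{(\Delta)}_{200,n}(x))$; $\mathcal{D}(f_{200,n})$ is the set of distinct dynamics over $\Delta\in\mathcal{P}_n$ (equivalently, the number of distinct maps $f^{(\Delta)}_{200,n}$). The sensitivity to synchronism is $\mu(f_{200,n})=|\mathcal{D}(f_{200,n})|/(3^n-2^{n+1}+2)$. *)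

theory Defs
  imports Complex_Main "HOL-Library.FuncSet"
begin

definition r200 :: "bool \<Rightarrow> bool \<Rightarrow> bool \<Rightarrow> bool" where
  "r200 x1 x2 x3 = (x2 \<and> (x1 \<or> x3))"

definition f200 :: "nat \<Rightarrow> bool list \<Rightarrow> bool list" where
  "f200 n x = map (\<lambda>i. r200 (x ! ((i + n - 1) mod n)) (x ! i) (x ! ((i + 1) mod n))) [0..<n]"

definition block_update :: "nat \<Rightarrow> nat set \<Rightarrow> bool list \<Rightarrow> bool list" where
  "block_update n B x = map (\<lambda>i. if i \<in> B then f200 n x ! i else x ! i) [0..<n]"

definition ordered_partitions :: "nat \<Rightarrow> nat set list set" where
  "ordered_partitions n = {D. (\<forall>B\<in>set D. B \<noteq> {}) \<and> \<Union>(set D) = {..<n} \<and>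
     (\<forall>i<length D. \<forall>j<length D. i \<noteq> j \<longrightarrow> D ! i \<inter> D ! j = {})}"

text \<open>f^(Delta) = f^(Delta_k) o ... o f^(Delta_1) (fold applies the first block first).\<close>
definition async_update :: "nat \<Rightarrow> nat set list \<Rightarrow> bool list \<Rightarrow> bool list" where
  "async_update n D = fold (block_update n) D"

definition configs :: "nat \<Rightarrow> bool list set" where
  "configs n = {x. length x = n}"

text \<open>Distinct dynamics = distinct maps on the configuration space.\<close>
definition dynamics200 :: "nat \<Rightarrow> (bool list \<Rightarrow> bool list) set" where
  "dynamics200 n = (\<lambda>D. restrict (async_update n D) (configs n)) ` ordered_partitions n"

definition mu200 :: "nat \<Rightarrow> real" where
  "mu200 n = real (card (dynamics200 n)) / (3 ^ n - 2 ^ (n + 1) + 2)"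

end

theory Submission
  imports Defs
begin

lemma f200_nth:
  "length x = n \<Longrightarrow> i < n \<Longrightarrow>
   f200 n x ! i = r200 (x ! ((i + n - 1) mod n)) (x ! i) (x ! ((i + 1) mod n))"
  by (simp add: f200_def)

lemma len_f200[simp]: "length (f200 n x) = n"
  by (simp add: f200_def)

lemma nb1: "i < (n::nat) \<Longrightarrow> ((i + 1) mod n + n - 1) mod n = i"
proof -
  assume a: "i < n"
  show ?thesis
  proof (cases "i + 1 = n")
    case True
    then show ?thesis using a by simp
  next
    case False
    then have "(i + 1) mod n = i + 1" using a by simp
    then show ?thesis using a by simp
  qed
qed

lemma nb2: "i < (n::nat) \<Longrightarrow> ((i + n - 1) mod n + 1) mod n = i"
proof -
  assume a: "i < n"
  show ?thesis
  proof (cases "i = 0")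
    case True
    then show ?thesis using a
      by (metis Suc_diff_1 add_0 add_diff_inverse_nat less_numeral_extra(3) mod_less mod_self not_less_zero zero_less_iff_neq_zero add.commute diff_less less_one plus_1_eq_Suc)
  next
    case False
    then have "(i + n - 1) mod n = i - 1" using a
      by (metis Nat.add_diff_assoc2 One_nat_def Suc_leI add.commute less_imp_diff_less mod_add_self2 mod_less not_gr0)
    then show ?thesis using a False by simp
  qed
qed

lemma mix:
  assumes lx: "length x = n"
  shows "f200 n (map (\<lambda>i. if i \<in> S then f200 n x ! i else x ! i) [0..<n]) = f200 n x"
    (is "f200 n ?y = _")
proof (rule nth_equalityI)
  show "length (f200 n ?y) = length (f200 n x)" by simp
  fix i assume "i < length (f200 n ?y)"
  then have i: "i < n" by simp
  define p where "p = (i + n - 1) mod n"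
  define q where "q = (i + 1) mod n"
  have np: "n > 0" using i by simp
  have p: "p < n" unfolding p_def using np by simp
  have q: "q < n" unfolding q_def using np by simp
  have pq: "(p + 1) mod n = i" unfolding p_def using nb2[OF i] .
  have qp: "(q + n - 1) mod n = i" unfolding q_def using nb1[OF i] .
  have ly: "length ?y = n" by simp
  have yi: "\<And>j. j < n \<Longrightarrow> ?y ! j = (if j \<in> S then f200 n x ! j else x ! j)" by simp
  have fp: "f200 n x ! p = r200 (x ! ((p + n - 1) mod n)) (x ! p) (x ! i)"
    using f200_nth[OF lx p] pq by simp
  have fq: "f200 n x ! q = r200 (x ! i) (x ! q) (x ! ((q + 1) mod n))"
    using f200_nth[OF lx q] qp by simp
  have fi: "f200 n x ! i = r200 (x ! p) (x ! i) (x ! q)"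
    using f200_nth[OF lx i] p_def q_def by simp
  have "f200 n ?y ! i = r200 (?y ! p) (?y ! i) (?y ! q)"
    using f200_nth[OF ly i] p_def q_def by simp
  also have "\<dots> = f200 n x ! i"
    unfolding yi[OF p] yi[OF q] yi[OF i] fp fq fi
    by (auto simp: r200_def)
  finally show "f200 n ?y ! i = f200 n x ! i" .
qed

lemma fold_mix:
  assumes lx: "length x = n"
  shows "fold (block_update n) D (map (\<lambda>i. if i \<in> S then f200 n x ! i else x ! i) [0..<n])
       = map (\<lambda>i. if i \<in> S \<union> \<Union>(set D) then f200 n x ! i else x ! i) [0..<n]"
  using lx
proof (induction D arbitrary: S)
  case Nil
  then show ?case by simp
next
  case (Cons B D)
  have "block_update n B (map (\<lambda>i. if i \<in> S then f200 n x ! i else x ! i) [0..<n])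
      = map (\<lambda>i. if i \<in> S \<union> B then f200 n x ! i else x ! i) [0..<n]"
    unfolding block_update_def mix[OF Cons.prems]
    by (rule nth_equalityI) auto
  then show ?case using Cons.IH[OF Cons.prems, of "S \<union> B"]
    by (simp add: Un_assoc)
qed

lemma async_eq:
  assumes lx: "length x = n" and D: "D \<in> ordered_partitions n"
  shows "async_update n D x = f200 n x"
proof -
  have U: "\<Union>(set D) = {..<n}" using D by (simp add: ordered_partitions_def)
  have x: "x = map (\<lambda>i. if i \<in> {} then f200 n x ! i else x ! i) [0..<n]"
    using lx by (intro nth_equalityI) auto
  have "async_update n D x = map (\<lambda>i. if i \<in> {} \<union> \<Union>(set D) then f200 n x ! i else x ! i) [0..<n]"
    unfolding async_update_def by (subst x) (rule fold_mix[OF lx])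
  also have "\<dots> = f200 n x" using U by (intro nth_equalityI) auto
  finally show ?thesis .
qed

lemma dyn:
  assumes "n \<ge> 1"
  shows "dynamics200 n = {restrict (f200 n) (configs n)}"
proof -
  have "[{..<n}] \<in> ordered_partitions n" using assms
    by (auto simp: ordered_partitions_def lessThan_empty_iff)
  moreover have "\<And>D. D \<in> ordered_partitions n \<Longrightarrow>
      restrict (async_update n D) (configs n) = restrict (f200 n) (configs n)"
    by (rule restrict_ext) (auto simp: configs_def async_eq)
  ultimately show ?thesis unfolding dynamics200_def by (auto intro!: image_eqI)
qed

theorem mainTheorem2:
  fixes n :: nat
  assumes "n \<ge> 1"
  shows "mu200 n = 1 / (3 ^ n - 2 ^ (n + 1) + 2)"
  unfolding mu200_def dyn[OF assms] by simp

end
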